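(* For any fair allocation instance with agents $a_1,\dots,a_n$, a finite set $M$ of indivisible goods, XOS valuations $v_1,\dots,v_n$, and entitlements $b_1,\dots,b_n>0$, there exists an allocation $A=(A_1,\dots,A_n)$ of $M$ such that $v_i(A_i)\ge\frac1n\mathsf{WMMS}_i$ for every agent $a_i$.
   Context: A valuation $v:2^M\to\mathbb{R}_{\ge0}$ is XOS if there is a finite collection of additive functions $\{\ell_t\}_t$ with nonnegative item values such that $v(S)=\max_t\ell_t(S)$ for all $S\subseteq M$. An allocation is a partition of $M$ into bundles $A_1,\dots,A_n$, with $A_i$ given to $a_i$. Let $\Pi_n$ be the set of partitions $(S_1,\dots,S_n)$ of $M$ into $n$ bundles. The weighted maximin share of $a_i$ is $\mathsf{WMMS}_i=\max_{S\in\Pi_n}\min_{j\in[n]}v_i(S_j)\frac{b_i}{b_j}$. *)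

theory Defs
  imports "HOL-Analysis.Analysis"
begin

text \<open>Agents are indexed by 0..<n; goods form a finite set M.
  An additive function is given by nonnegative item values l :: 'g => real,
  with l(S) = sum l S.\<close>

definition is_XOS :: "'g set \<Rightarrow> ('g set \<Rightarrow> real) \<Rightarrow> bool" where
  "is_XOS M v \<longleftrightarrow> (\<exists>L :: ('g \<Rightarrow> real) set. finite L \<and> L \<noteq> {} \<and>
      (\<forall>l\<in>L. \<forall>g\<in>M. l g \<ge> 0) \<and>
      (\<forall>S. S \<subseteq> M \<longrightarrow> v S = (MAX l\<in>L. sum l S)))"

definition is_allocation :: "nat \<Rightarrow> 'g set \<Rightarrow> (nat \<Rightarrow> 'g set) \<Rightarrow> bool" where
  "is_allocation n M A \<longleftrightarrow>
     (\<Union>i\<in>{..<n}. A i) = M \<and>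
     (\<forall>i<n. \<forall>j<n. i \<noteq> j \<longrightarrow> A i \<inter> A j = {})"

definition WMMS :: "nat \<Rightarrow> 'g set \<Rightarrow> (nat \<Rightarrow> 'g set \<Rightarrow> real) \<Rightarrow> (nat \<Rightarrow> real) \<Rightarrow> nat \<Rightarrow> real" where
  "WMMS n M v b i =
     Sup ((\<lambda>S. MIN j\<in>{..<n}. v i (S j) * b i / b j) ` {S. is_allocation n M S})"

end

theory Submission
  imports Defs
begin

definition dd :: "nat \<Rightarrow> nat \<Rightarrow> nat \<Rightarrow> nat" where
  "dd n c p = (if c \<le> p then p - c else p + n - c)"

definition nxt :: "nat \<Rightarrow> nat \<Rightarrow> nat" where
  "nxt n c = (if Suc c = n then 0 else Suc c)"

lemma nxt_lt: "c < n \<Longrightarrow> nxt n c < n"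
  by (auto simp: nxt_def)

lemma dd_self: "dd n c c = 0" by (simp add: dd_def)

lemma dd_nxt_self: "c < n \<Longrightarrow> dd n (nxt n c) c = n - 1"
  by (auto simp: dd_def nxt_def)

lemma dd_pos: "c < n \<Longrightarrow> p < n \<Longrightarrow> p \<noteq> c \<Longrightarrow> dd n c p \<ge> 1"
  by (auto simp: dd_def)

lemma dd_nxt: "c < n \<Longrightarrow> p < n \<Longrightarrow> p \<noteq> c \<Longrightarrow> dd n (nxt n c) p = dd n c p - 1"
  by (auto simp: dd_def nxt_def)

lemma card_hit_le1:
  assumes "\<forall>j\<in>J. \<forall>j'\<in>J. j \<noteq> j' \<longrightarrow> F j \<inter> F j' = {}" "finite J"
  shows "card {j\<in>J. g \<in> F j} \<le> 1"
proof -
  have "finite {j\<in>J. g \<in> F j}" using assms(2) by simp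
  moreover have "\<forall>a1\<in>{j\<in>J. g \<in> F j}. \<forall>a2\<in>{j\<in>J. g \<in> F j}. a1 = a2"
    using assms(1) by blast
  ultimately have "card {j\<in>J. g \<in> F j} \<le> Suc 0" using card_le_Suc0_iff_eq by blast
  then show ?thesis by simp
qed

lemma exists_max:
  fixes l :: "'g \<Rightarrow> real"
  assumes "finite X" "X \<noteq> {}"
  shows "\<exists>g\<in>X. \<forall>h\<in>X. l h \<le> l g"
proof -
  have "Max (l ` X) \<in> l ` X" using assms by simp
  then obtain g where "g \<in> X" "l g = Max (l ` X)" by auto
  moreover have "\<forall>h\<in>X. l h \<le> Max (l ` X)" using assms by simp
  ultimately show ?thesis by (intro bexI[of _ g]) auto
qed


lemma rr:
  fixes R :: "'g set" and \<sigma> :: "nat \<Rightarrow> nat" and L :: "nat \<Rightarrow> nat \<Rightarrow> 'g \<Rightarrow> real"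
    and Fam :: "nat \<Rightarrow> nat \<Rightarrow> 'g set" and J :: "nat \<Rightarrow> nat set" and U :: "nat \<Rightarrow> bool"
    and ch :: "nat \<Rightarrow> nat"
  assumes "card R = k" "finite R" "c < n" "inj_on \<sigma> {..<n}" "\<sigma> ` {..<n} \<subseteq> {..<n}"
    and "\<forall>p<n. \<forall>j. \<forall>g\<in>R. L p j g \<ge> 0"
    and "\<forall>p<n. U p \<longrightarrow> finite (J p) \<and> (\<forall>j\<in>J p. \<forall>j'\<in>J p. j \<noteq> j' \<longrightarrow> Fam p j \<inter> Fam p j' = {})
            \<and> card {j\<in>J p. Fam p j \<subseteq> R} > dd n c p"
  shows "\<exists>A. (\<Union>i<n. A i) = R \<and> (\<forall>i<n. \<forall>j<n. i \<noteq> j \<longrightarrow> A i \<inter> A j = {}) \<and>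
     (\<forall>p<n. \<not> U p \<longrightarrow> (\<forall>m\<ge>0. (\<forall>g\<in>Fam p (ch p) \<inter> R. L p (ch p) g \<le> m) \<longrightarrow>
          real n * sum (L p (ch p)) (A (\<sigma> p) \<inter> Fam p (ch p))
            \<ge> sum (L p (ch p)) (Fam p (ch p) \<inter> R) - real (dd n c p) * m)) \<and>
     (\<forall>p<n. U p \<longrightarrow> (\<exists>j\<in>J p. Fam p j \<subseteq> R \<and>
          real n * sum (L p j) (A (\<sigma> p) \<inter> Fam p j) \<ge> sum (L p j) (Fam p j)))"
  using assms
proof (induction k arbitrary: R c U ch)
  case 0
  have R0: "R = {}" using "0.prems"(1,2) by simp
  show ?case
  proof (rule exI[of _ "\<lambda>_. {}"], intro conjI)
    show "(\<Union>i<n. {}) = R" using R0 by simp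
    show "\<forall>i<n. \<forall>j<n. i \<noteq> j \<longrightarrow> ({}::'g set) \<inter> {} = {}" by simp
    show "\<forall>p<n. \<not> U p \<longrightarrow> (\<forall>m\<ge>0. (\<forall>g\<in>Fam p (ch p) \<inter> R. L p (ch p) g \<le> m) \<longrightarrow>
          real n * sum (L p (ch p)) ({} \<inter> Fam p (ch p))
            \<ge> sum (L p (ch p)) (Fam p (ch p) \<inter> R) - real (dd n c p) * m)"
      using R0 by simp
    show "\<forall>p<n. U p \<longrightarrow> (\<exists>j\<in>J p. Fam p j \<subseteq> R \<and>
          real n * sum (L p j) ({} \<inter> Fam p j) \<ge> sum (L p j) (Fam p j))"
    proof (intro allI impI)
      fix p assume p: "p < n" "U p"
      then have "card {j\<in>J p. Fam p j \<subseteq> R} > dd n c p" using "0.prems"(7) by blast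
      then have "card {j\<in>J p. Fam p j \<subseteq> R} > 0" by linarith
      then have "{j\<in>J p. Fam p j \<subseteq> R} \<noteq> {}" using card_gt_0_iff by blast
      then obtain j where "j \<in> J p" "Fam p j \<subseteq> R" by blast
      then show "\<exists>j\<in>J p. Fam p j \<subseteq> R \<and> real n * sum (L p j) ({} \<inter> Fam p j) \<ge> sum (L p j) (Fam p j)"
        using R0 by auto
    qed
  qed
next
  case (Suc k)
  note fin = \<open>finite R\<close> and cn = \<open>c < n\<close> and inj = \<open>inj_on \<sigma> {..<n}\<close> and sig = \<open>\<sigma> ` {..<n} \<subseteq> {..<n}\<close>
  note nonneg = Suc.prems(6) and famh = Suc.prems(7)
  have Rne: "R \<noteq> {}" using Suc.prems(1) by auto
  define jc where "jc = (if U c then (SOME j. j \<in> J c \<and> Fam c j \<subseteq> R) else ch c)"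
  have jc: "jc \<in> J c \<and> Fam c jc \<subseteq> R" if "U c"
  proof -
    have "card {j\<in>J c. Fam c j \<subseteq> R} > dd n c c" using famh cn that by blast
    then have "card {j\<in>J c. Fam c j \<subseteq> R} > 0" by linarith
    then have "{j\<in>J c. Fam c j \<subseteq> R} \<noteq> {}" using card_gt_0_iff by blast
    then have "\<exists>j. j \<in> J c \<and> Fam c j \<subseteq> R" by blast
    then have "(SOME j. j \<in> J c \<and> Fam c j \<subseteq> R) \<in> J c \<and> Fam c (SOME j. j \<in> J c \<and> Fam c j \<subseteq> R) \<subseteq> R"
      by (rule someI_ex)
    then show ?thesis unfolding jc_def using that by simp
  qed
  define T where "T = Fam c jc"
  define l where "l = L c jc"
  obtain g where gR: "g \<in> R" and gmax: "T \<inter> R \<noteq> {} \<Longrightarrow> g \<in> T \<and> (\<forall>h\<in>T \<inter> R. l h \<le> l g)"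
  proof (cases "T \<inter> R = {}")
    case True
    then show ?thesis using that Rne by blast
  next
    case False
    then obtain g where "g \<in> T \<inter> R" "\<forall>h\<in>T \<inter> R. l h \<le> l g" using exists_max[of "T \<inter> R" l] fin by auto
    then show ?thesis using that by blast
  qed
  define R' where "R' = R - {g}"
  define c' where "c' = nxt n c"
  define U' where "U' = U(c := False)"
  define ch' where "ch' = ch(c := jc)"
  have cardR': "card R' = k" using Suc.prems(1) gR fin by (simp add: R'_def)
  have finR': "finite R'" using fin by (simp add: R'_def)
  have c'n: "c' < n" using cn by (simp add: c'_def nxt_lt)
  have nonneg': "\<forall>p<n. \<forall>j. \<forall>g\<in>R'. L p j g \<ge> 0" using nonneg by (auto simp: R'_def)
  have famh': "\<forall>p<n. U' p \<longrightarrow> finite (J p) \<and> (\<forall>j\<in>J p. \<forall>j'\<in>J p. j \<noteq> j' \<longrightarrow> Fam p j \<inter> Fam p j' = {})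
            \<and> card {j\<in>J p. Fam p j \<subseteq> R'} > dd n c' p"
  proof (intro allI impI)
    fix p assume p: "p < n" "U' p"
    then have pc: "p \<noteq> c" and Up: "U p" by (auto simp: U'_def split: if_splits)
    have fJ: "finite (J p)" and dis: "\<forall>j\<in>J p. \<forall>j'\<in>J p. j \<noteq> j' \<longrightarrow> Fam p j \<inter> Fam p j' = {}"
      and cd: "card {j\<in>J p. Fam p j \<subseteq> R} > dd n c p" using famh p(1) Up by blast+
    have sub: "{j\<in>J p. Fam p j \<subseteq> R} \<subseteq> {j\<in>J p. Fam p j \<subseteq> R'} \<union> {j\<in>J p. g \<in> Fam p j}"
      by (auto simp: R'_def)
    have "card {j\<in>J p. Fam p j \<subseteq> R} \<le> card ({j\<in>J p. Fam p j \<subseteq> R'} \<union> {j\<in>J p. g \<in> Fam p j})"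
      using sub fJ by (intro card_mono) auto
    also have "\<dots> \<le> card {j\<in>J p. Fam p j \<subseteq> R'} + card {j\<in>J p. g \<in> Fam p j}" by (rule card_Un_le)
    also have "\<dots> \<le> card {j\<in>J p. Fam p j \<subseteq> R'} + 1" using card_hit_le1[OF dis fJ, of g] by simp
    finally have "card {j\<in>J p. Fam p j \<subseteq> R'} > dd n c' p"
      using cd dd_nxt[OF cn p(1) pc] dd_pos[OF cn p(1) pc] by (simp add: c'_def)
    then show "finite (J p) \<and> (\<forall>j\<in>J p. \<forall>j'\<in>J p. j \<noteq> j' \<longrightarrow> Fam p j \<inter> Fam p j' = {})
            \<and> card {j\<in>J p. Fam p j \<subseteq> R'} > dd n c' p" using fJ dis by auto
  qed
  obtain A' where A'u: "(\<Union>i<n. A' i) = R'" and A'd: "\<forall>i<n. \<forall>j<n. i \<noteq> j \<longrightarrow> A' i \<inter> A' j = {}"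
    and A'c: "\<forall>p<n. \<not> U' p \<longrightarrow> (\<forall>m\<ge>0. (\<forall>g\<in>Fam p (ch' p) \<inter> R'. L p (ch' p) g \<le> m) \<longrightarrow>
          real n * sum (L p (ch' p)) (A' (\<sigma> p) \<inter> Fam p (ch' p))
            \<ge> sum (L p (ch' p)) (Fam p (ch' p) \<inter> R') - real (dd n c' p) * m)"
    and A'v: "\<forall>p<n. U' p \<longrightarrow> (\<exists>j\<in>J p. Fam p j \<subseteq> R' \<and>
          real n * sum (L p j) (A' (\<sigma> p) \<inter> Fam p j) \<ge> sum (L p j) (Fam p j))"
    using Suc.IH[where ch=ch', OF cardR' finR' c'n inj sig nonneg' famh'] by (elim exE conjE) (rule that; assumption)
  define A where "A = A'(\<sigma> c := insert g (A' (\<sigma> c)))"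
  have scn: "\<sigma> c < n" using sig cn by auto
  have A'sub: "A' i \<subseteq> R'" if "i < n" for i using A'u that by auto
  have gA': "g \<notin> A' i" if "i < n" for i using A'sub[OF that] by (auto simp: R'_def)
  have Ai: "A i = (if i = \<sigma> c then insert g (A' i) else A' i)" for i by (simp add: A_def)
  have Au: "(\<Union>i<n. A i) = R"
  proof -
    have "(\<Union>i<n. A i) = insert g (\<Union>i<n. A' i)"
    proof
      show "(\<Union>i<n. A i) \<subseteq> insert g (\<Union>i<n. A' i)" by (auto simp: Ai split: if_splits)
      show "insert g (\<Union>i<n. A' i) \<subseteq> (\<Union>i<n. A i)" using scn by (force simp: Ai)
    qed
    then show ?thesis using A'u gR by (auto simp: R'_def)
  qed
  have Ad: "\<forall>i<n. \<forall>j<n. i \<noteq> j \<longrightarrow> A i \<inter> A j = {}"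
  proof (intro allI impI)
    fix i j assume ij: "i < n" "j < n" "i \<noteq> j"
    have "A' i \<inter> A' j = {}" using A'd ij by blast
    then show "A i \<inter> A j = {}" using gA'[OF ij(1)] gA'[OF ij(2)] ij(3) by (auto simp: Ai)
  qed
  have Asub: "A i \<subseteq> R" if "i < n" for i
  proof -
    have "A i \<subseteq> insert g (A' i)" by (auto simp: Ai)
    moreover have "insert g (A' i) \<subseteq> R" using A'sub[OF that] gR unfolding R'_def by blast
    ultimately show ?thesis by (rule order_trans)
  qed
  have K: "real n * sum l (A (\<sigma> c) \<inter> T) \<ge> sum l (T \<inter> R)"
  proof (cases "T \<inter> R = {}")
    case True
    have "sum l (A (\<sigma> c) \<inter> T) \<ge> 0"
      using Asub[OF scn] nonneg[rule_format, OF cn] unfolding l_def by (intro sum_nonneg) blast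
    then have "0 \<le> real n * sum l (A (\<sigma> c) \<inter> T)" by simp
    then show ?thesis using True by simp
  next
    case False
    have gT: "g \<in> T" and gm: "\<forall>h\<in>T \<inter> R. l h \<le> l g" using gmax[OF False] by simp_all
    have lg0: "l g \<ge> 0" using nonneg[rule_format, OF cn gR] by (simp add: l_def)
    have ncc: "\<not> U' c" "ch' c = jc" unfolding U'_def ch'_def by simp_all
    have bnd: "\<forall>h\<in>Fam c (ch' c) \<inter> R'. L c (ch' c) h \<le> l g"
      using gm by (auto simp: ncc T_def l_def R'_def)
    have "real n * sum (L c (ch' c)) (A' (\<sigma> c) \<inter> Fam c (ch' c))
            \<ge> sum (L c (ch' c)) (Fam c (ch' c) \<inter> R') - real (dd n c' c) * l g"
      by (rule A'c[rule_format]) (use cn ncc(1) lg0 bnd in auto)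
    then have ih: "real n * sum l (A' (\<sigma> c) \<inter> T) \<ge> sum l (T \<inter> R') - real (n - 1) * l g"
      using ncc(2) dd_nxt_self[OF cn] by (simp add: T_def l_def c'_def)
    have e1: "A (\<sigma> c) \<inter> T = insert g (A' (\<sigma> c) \<inter> T)" using gT by (auto simp: A_def)
    have fin1: "finite (A' (\<sigma> c) \<inter> T)"
      by (intro finite_Int disjI1 finite_subset[OF A'sub[OF scn] finR'])
    have s1: "sum l (A (\<sigma> c) \<inter> T) = l g + sum l (A' (\<sigma> c) \<inter> T)"
      unfolding e1 using gA'[OF scn] fin1 by simp
    have e2: "T \<inter> R = insert g (T \<inter> R')" using gT gR by (auto simp: R'_def)
    have s2: "sum l (T \<inter> R) = l g + sum l (T \<inter> R')"
      unfolding e2 using finR' by (simp add: R'_def)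
    have rn: "real (n - 1) = real n - 1" using cn by simp
    show ?thesis using ih s1 s2 rn by (simp add: algebra_simps)
  qed
  show ?case
  proof (intro exI[of _ A] conjI)
    show "(\<Union>i<n. A i) = R" by (rule Au)
    show "\<forall>i<n. \<forall>j<n. i \<noteq> j \<longrightarrow> A i \<inter> A j = {}" by (rule Ad)
    show "\<forall>p<n. \<not> U p \<longrightarrow> (\<forall>m\<ge>0. (\<forall>g\<in>Fam p (ch p) \<inter> R. L p (ch p) g \<le> m) \<longrightarrow>
          real n * sum (L p (ch p)) (A (\<sigma> p) \<inter> Fam p (ch p))
            \<ge> sum (L p (ch p)) (Fam p (ch p) \<inter> R) - real (dd n c p) * m)"
    proof (intro allI impI)
      fix p m assume p: "p < n" "\<not> U p" and m: "m \<ge> 0" and mb: "\<forall>g\<in>Fam p (ch p) \<inter> R. L p (ch p) g \<le> m"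
      show "real n * sum (L p (ch p)) (A (\<sigma> p) \<inter> Fam p (ch p))
            \<ge> sum (L p (ch p)) (Fam p (ch p) \<inter> R) - real (dd n c p) * m"
      proof (cases "p = c")
        case True
        then have "ch p = jc" using p(2) by (simp add: jc_def)
        then show ?thesis using K True m by (simp add: T_def l_def dd_self)
      next
        case False
        have sp: "\<sigma> p \<noteq> \<sigma> c" using inj False p(1) cn by (auto dest: inj_onD)
        have nU': "\<not> U' p" "ch' p = ch p" using False p by (auto simp: U'_def ch'_def)
        define Tp where "Tp = Fam p (ch p)"
        define lp where "lp = L p (ch p)"
        have mb': "\<forall>h\<in>Fam p (ch' p) \<inter> R'. L p (ch' p) h \<le> m" using mb nU'(2) by (auto simp: R'_def)
        have "real n * sum (L p (ch' p)) (A' (\<sigma> p) \<inter> Fam p (ch' p))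
            \<ge> sum (L p (ch' p)) (Fam p (ch' p) \<inter> R') - real (dd n c' p) * m"
          by (rule A'c[rule_format]) (use p(1) nU'(1) m mb' in auto)
        then have ih: "real n * sum lp (A' (\<sigma> p) \<inter> Tp) \<ge> sum lp (Tp \<inter> R') - real (dd n c' p) * m"
          using nU'(2) by (simp add: Tp_def lp_def)
        have d1: "real (dd n c' p) = real (dd n c p) - 1"
          using dd_nxt[OF cn p(1) False] dd_pos[OF cn p(1) False] by (simp add: c'_def of_nat_diff)
        have s: "sum lp (Tp \<inter> R) \<le> sum lp (Tp \<inter> R') + m"
        proof (cases "g \<in> Tp")
          case True
          have e2: "Tp \<inter> R = insert g (Tp \<inter> R')" using True gR by (auto simp: R'_def)
          have "sum lp (Tp \<inter> R) = lp g + sum lp (Tp \<inter> R')"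
            unfolding e2 using finR' by (simp add: R'_def)
          moreover have "lp g \<le> m" using mb True gR by (auto simp: Tp_def lp_def)
          ultimately show ?thesis by simp
        next
          case False
          then have "Tp \<inter> R = Tp \<inter> R'" by (auto simp: R'_def)
          then show ?thesis using m by simp
        qed
        have "A (\<sigma> p) = A' (\<sigma> p)" using sp by (simp add: A_def)
        then show ?thesis using ih d1 s unfolding Tp_def[symmetric] lp_def[symmetric]
          by (simp add: algebra_simps)
      qed
    qed
    show "\<forall>p<n. U p \<longrightarrow> (\<exists>j\<in>J p. Fam p j \<subseteq> R \<and>
          real n * sum (L p j) (A (\<sigma> p) \<inter> Fam p j) \<ge> sum (L p j) (Fam p j))"
    proof (intro allI impI)
      fix p assume p: "p < n" "U p"
      show "\<exists>j\<in>J p. Fam p j \<subseteq> R \<and> real n * sum (L p j) (A (\<sigma> p) \<inter> Fam p j) \<ge> sum (L p j) (Fam p j)"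
      proof (cases "p = c")
        case True
        then have j: "jc \<in> J c" "T \<subseteq> R" using jc p(2) by (auto simp: T_def)
        then have "T \<inter> R = T" by auto
        then show ?thesis using K j True by (intro bexI[of _ jc]) (auto simp: T_def l_def)
      next
        case False
        have sp: "\<sigma> p \<noteq> \<sigma> c" using inj False p(1) cn by (auto dest: inj_onD)
        have U'p: "U' p" using False p by (auto simp: U'_def)
        obtain j where "j \<in> J p" "Fam p j \<subseteq> R'"
          "real n * sum (L p j) (A' (\<sigma> p) \<inter> Fam p j) \<ge> sum (L p j) (Fam p j)"
          using A'v[rule_format, OF p(1) U'p] by blast
        moreover have "A (\<sigma> p) = A' (\<sigma> p)" using sp by (simp add: A_def)
        ultimately show ?thesis by (intro bexI[of _ j]) (auto simp: R'_def)
      qed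
    qed
  qed
qed


lemma wmms_attained:
  fixes M :: "'g set" and v :: "nat \<Rightarrow> 'g set \<Rightarrow> real"
  assumes "finite M" "n \<ge> 1"
  shows "\<exists>S. is_allocation n M S \<and> (\<forall>j<n. WMMS n M v b i \<le> v i (S j) * b i / b j)"
proof -
  define f where "f = (\<lambda>S::nat \<Rightarrow> 'g set. MIN j\<in>{..<n}. v i (S j) * b i / b j)"
  define V where "V = f ` {S. is_allocation n M S}"
  have sub: "V \<subseteq> f ` (PiE {..<n} (\<lambda>_. Pow M))"
  proof
    fix x assume "x \<in> V"
    then obtain S where S: "is_allocation n M S" "x = f S" by (auto simp: V_def)
    have "restrict S {..<n} \<in> PiE {..<n} (\<lambda>_. Pow M)"
      using S(1) unfolding is_allocation_def by auto
    moreover have "f (restrict S {..<n}) = f S"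
    proof -
      have "(\<lambda>j. v i (restrict S {..<n} j) * b i / b j) ` {..<n} = (\<lambda>j. v i (S j) * b i / b j) ` {..<n}"
        by (intro image_cong) auto
      then show ?thesis by (simp add: f_def)
    qed
    ultimately show "x \<in> f ` (PiE {..<n} (\<lambda>_. Pow M))" using S(2) by (metis image_eqI)
  qed
  have finV: "finite V"
  proof (rule finite_subset[OF sub])
    show "finite (f ` (PiE {..<n} (\<lambda>_. Pow M)))"
      using assms(1) by (intro finite_imageI finite_PiE) auto
  qed
  define S0 where "S0 = (\<lambda>j::nat. if j = 0 then M else ({}::'g set))"
  have "is_allocation n M S0"
    unfolding is_allocation_def S0_def using assms(2) by auto
  then have neV: "V \<noteq> {}" by (auto simp: V_def)
  have "WMMS n M v b i = Max V"
    unfolding WMMS_def using finV neV by (simp add: V_def f_def cSup_eq_Max)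
  moreover have "Max V \<in> V" using finV neV by (rule Max_in)
  ultimately obtain S where S: "is_allocation n M S" "WMMS n M v b i = f S"
    by (auto simp: V_def)
  have "\<forall>j<n. f S \<le> v i (S j) * b i / b j"
    unfolding f_def by (intro allI impI Min_le) auto
  then show ?thesis using S by auto
qed

theorem theorem3:
  fixes n :: nat and M :: "'g set" and v :: "nat \<Rightarrow> 'g set \<Rightarrow> real" and b :: "nat \<Rightarrow> real"
  assumes "n \<ge> 1"
    and "finite M"
    and "\<And>i. i < n \<Longrightarrow> is_XOS M (v i)"
    and "\<And>i. i < n \<Longrightarrow> b i > 0"
  shows "\<exists>A. is_allocation n M A \<and>
           (\<forall>i<n. v i (A i) \<ge> WMMS n M v b i / real n)"
proof -
  define Ls where "Ls i = (SOME L :: ('g \<Rightarrow> real) set. finite L \<and> L \<noteq> {} \<and>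
      (\<forall>l\<in>L. \<forall>g\<in>M. l g \<ge> 0) \<and> (\<forall>S. S \<subseteq> M \<longrightarrow> v i S = (MAX l\<in>L. sum l S)))" for i
  have Ls: "finite (Ls i) \<and> Ls i \<noteq> {} \<and>
      (\<forall>l\<in>Ls i. \<forall>g\<in>M. l g \<ge> 0) \<and> (\<forall>S. S \<subseteq> M \<longrightarrow> v i S = (MAX l\<in>Ls i. sum l S))" if "i < n" for i
    unfolding Ls_def by (rule someI_ex[OF assms(3)[OF that, unfolded is_XOS_def]])
  have v_ge: "v i S \<ge> sum l S" if "i < n" "S \<subseteq> M" "l \<in> Ls i" for i S l
  proof -
    have "v i S = (MAX l\<in>Ls i. sum l S)" using Ls[OF that(1)] that(2) by simp
    moreover have "finite (Ls i)" using Ls[OF that(1)] by simp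
    ultimately show ?thesis using that(3) by simp
  qed
  have v_att: "\<exists>l\<in>Ls i. v i S = sum l S" if "i < n" "S \<subseteq> M" for i S
  proof -
    have "v i S = (MAX l\<in>Ls i. sum l S)" using Ls[OF that(1)] that(2) by simp
    moreover have "finite (Ls i)" "Ls i \<noteq> {}" using Ls[OF that(1)] by simp_all
    ultimately have "v i S \<in> (\<lambda>l. sum l S) ` Ls i" using Max_in by simp
    then show ?thesis by auto
  qed
  have l_nn: "l g \<ge> 0" if "i < n" "l \<in> Ls i" "g \<in> M" for i l g
    using Ls[OF that(1)] that(2,3) by simp
  define Sg where "Sg i = (SOME S. is_allocation n M S \<and> (\<forall>j<n. WMMS n M v b i \<le> v i (S j) * b i / b j))" for i
  have Sg: "is_allocation n M (Sg i) \<and> (\<forall>j<n. WMMS n M v b i \<le> v i (Sg i j) * b i / b j)" for i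
    unfolding Sg_def by (rule someI_ex[OF wmms_attained[OF assms(2) assms(1)]])
  have Sg_sub: "Sg i j \<subseteq> M" if "j < n" for i j
    using Sg[of i] that unfolding is_allocation_def by blast
  have Sg_dis: "Sg i j \<inter> Sg i j' = {}" if "j < n" "j' < n" "j \<noteq> j'" for i j j'
    using Sg[of i] that unfolding is_allocation_def by blast
  define lf where "lf i j = (SOME l. l \<in> Ls i \<and> v i (Sg i j) = sum l (Sg i j))" for i j
  have lf: "lf i j \<in> Ls i \<and> v i (Sg i j) = sum (lf i j) (Sg i j)" if "i < n" "j < n" for i j
  proof -
    have "\<exists>l. l \<in> Ls i \<and> v i (Sg i j) = sum l (Sg i j)"
      using v_att[OF that(1) Sg_sub[OF that(2)]] by blast
    then show ?thesis unfolding lf_def by (rule someI_ex)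
  qed
  define xs where "xs = sort_key (\<lambda>i. - b i) [0..<n]"
  define \<sigma> where "\<sigma> = (\<lambda>p. xs ! p)"
  have len: "length xs = n" by (simp add: xs_def)
  have setxs: "set xs = {..<n}" by (auto simp: xs_def)
  have dxs: "distinct xs" by (simp add: xs_def)
  have inj: "inj_on \<sigma> {..<n}"
  proof (rule inj_onI)
    fix p q assume pq: "p \<in> {..<n}" "q \<in> {..<n}" "\<sigma> p = \<sigma> q"
    then have "xs ! p = xs ! q" by (simp add: \<sigma>_def)
    then show "p = q" using nth_eq_iff_index_eq[OF dxs, of p q] pq(1,2) len by simp
  qed
  have sig: "\<sigma> ` {..<n} \<subseteq> {..<n}"
  proof (rule image_subsetI)
    fix p assume "p \<in> {..<n}"
    then have "xs ! p \<in> set xs" using len by (intro nth_mem) simp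
    then show "\<sigma> p \<in> {..<n}" using setxs by (simp add: \<sigma>_def)
  qed
  have surj: "\<exists>p<n. \<sigma> p = i" if "i < n" for i
  proof -
    have "i \<in> set xs" using that setxs by simp
    then obtain p where "p < length xs" "xs ! p = i" by (auto simp: in_set_conv_nth)
    then show ?thesis using len unfolding \<sigma>_def by blast
  qed
  have srt: "sorted (map (\<lambda>i. - b i) xs)" by (simp add: xs_def sorted_sort_key)
  have mono: "b (\<sigma> p) \<le> b (\<sigma> q)" if "q \<le> p" "p < n" for p q
  proof -
    have "map (\<lambda>i. - b i) xs ! q \<le> map (\<lambda>i. - b i) xs ! p"
      using sorted_nth_mono[OF srt that(1)] that len by simp
    then show ?thesis using that len by (simp add: \<sigma>_def)
  qed
  define L where "L = (\<lambda>p q g. if q \<le> p then lf (\<sigma> p) (\<sigma> q) g else 0)"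
  define Fam where "Fam = (\<lambda>p q. Sg (\<sigma> p) (\<sigma> q))"
  define J where "J = (\<lambda>p::nat. {..p})"
  have n0: "0 < n" using assms(1) by simp
  have famh: "\<forall>p<n. (\<lambda>_. True) p \<longrightarrow> finite (J p) \<and> (\<forall>j\<in>J p. \<forall>j'\<in>J p. j \<noteq> j' \<longrightarrow> Fam p j \<inter> Fam p j' = {})
            \<and> card {j\<in>J p. Fam p j \<subseteq> M} > dd n 0 p"
  proof (intro allI impI conjI)
    fix p assume p: "p < n"
    show "finite (J p)" by (simp add: J_def)
    show "\<forall>j\<in>J p. \<forall>j'\<in>J p. j \<noteq> j' \<longrightarrow> Fam p j \<inter> Fam p j' = {}"
    proof (intro ballI impI)
      fix j j' assume jj: "j \<in> J p" "j' \<in> J p" "j \<noteq> j'"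
      then have "j < n" "j' < n" using p by (auto simp: J_def)
      then have "\<sigma> j \<noteq> \<sigma> j'" "\<sigma> j < n" "\<sigma> j' < n" "\<sigma> p < n"
        using inj jj(3) sig p by (auto dest: inj_onD)
      then show "Fam p j \<inter> Fam p j' = {}" unfolding Fam_def by (intro Sg_dis) auto
    qed
    have "{j\<in>J p. Fam p j \<subseteq> M} = {..p}"
    proof -
      have "Fam p j \<subseteq> M" if "j \<le> p" for j
        unfolding Fam_def using that p sig by (intro Sg_sub) (auto simp: image_subset_iff)
      then show ?thesis by (auto simp: J_def)
    qed
    then show "card {j\<in>J p. Fam p j \<subseteq> M} > dd n 0 p" by (simp add: dd_def)
  qed
  have nonneg: "\<forall>p<n. \<forall>j. \<forall>g\<in>M. L p j g \<ge> 0"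
  proof (intro allI impI ballI)
    fix p j g assume p: "p < n" and g: "g \<in> M"
    show "L p j g \<ge> 0"
    proof (cases "j \<le> p")
      case True
      then have "\<sigma> p < n" "\<sigma> j < n" using p sig by (auto simp: image_subset_iff)
      then have "lf (\<sigma> p) (\<sigma> j) \<in> Ls (\<sigma> p)" using lf by blast
      then have "lf (\<sigma> p) (\<sigma> j) g \<ge> 0" using l_nn \<open>\<sigma> p < n\<close> g by blast
      then show ?thesis using True by (simp add: L_def)
    qed (simp add: L_def)
  qed
  obtain A where Au: "(\<Union>i<n. A i) = M" and Ad: "\<forall>i<n. \<forall>j<n. i \<noteq> j \<longrightarrow> A i \<inter> A j = {}"
    and Av: "\<forall>p<n. (\<lambda>_. True) p \<longrightarrow> (\<exists>j\<in>J p. Fam p j \<subseteq> M \<and>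
          real n * sum (L p j) (A (\<sigma> p) \<inter> Fam p j) \<ge> sum (L p j) (Fam p j))"
    using rr[where ch="\<lambda>_. 0", OF refl assms(2) n0 inj sig nonneg famh] by (elim exE conjE) (rule that; assumption)
  have alloc: "is_allocation n M A" unfolding is_allocation_def using Au Ad by blast
  show ?thesis
  proof (intro exI[of _ A] conjI alloc allI impI)
    fix i assume i: "i < n"
    obtain p where p: "p < n" "\<sigma> p = i" using surj[OF i] by blast
    obtain q where q: "q \<in> J p" "real n * sum (L p q) (A (\<sigma> p) \<inter> Fam p q) \<ge> sum (L p q) (Fam p q)"
      using Av p(1) by blast
    have qp: "q \<le> p" using q(1) by (simp add: J_def)
    define j where "j = \<sigma> q"
    have j: "j < n" using qp p(1) sig by (auto simp: j_def image_subset_iff)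
    have bij: "b i \<le> b j" using mono[OF qp p(1)] p(2) by (simp add: j_def)
    have lfj: "lf i j \<in> Ls i" "v i (Sg i j) = sum (lf i j) (Sg i j)" using lf[OF i j] by auto
    have q2: "real n * sum (lf i j) (A i \<inter> Sg i j) \<ge> v i (Sg i j)"
      using q(2) lfj(2) p(2) qp by (simp add: L_def Fam_def j_def)
    have Ai: "A i \<subseteq> M" using Au i by blast
    have finA: "finite (A i)" using Ai assms(2) by (rule finite_subset)
    have "sum (lf i j) (A i \<inter> Sg i j) \<le> sum (lf i j) (A i)"
      using finA Ai l_nn[OF i lfj(1)] by (intro sum_mono2) auto
    also have "\<dots> \<le> v i (A i)" using v_ge[OF i Ai lfj(1)] .
    finally have s: "sum (lf i j) (A i \<inter> Sg i j) \<le> v i (A i)" .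
    have vnn: "v i (Sg i j) \<ge> 0"
      using lfj Sg_sub[OF j] l_nn[OF i lfj(1)] by (auto intro: sum_nonneg)
    have W: "WMMS n M v b i \<le> v i (Sg i j) * b i / b j" using Sg[of i] j by blast
    have bi: "b i > 0" "b j > 0" using assms(4) i j by auto
    have "v i (Sg i j) * b i / b j \<le> v i (Sg i j)"
      using bi bij vnn by (simp add: divide_le_eq mult_left_mono)
    then have "WMMS n M v b i \<le> real n * v i (A i)"
    proof -
      have "real n * sum (lf i j) (A i \<inter> Sg i j) \<le> real n * v i (A i)"
        by (rule mult_left_mono[OF s]) simp
      then show ?thesis using W q2 \<open>v i (Sg i j) * b i / b j \<le> v i (Sg i j)\<close> by linarith
    qed
    then show "v i (A i) \<ge> WMMS n M v b i / real n"
      using n0 by (simp add: divide_le_eq mult.commute)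
  qed
qed

end
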